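(* Let $P:\mathcal C^{op}\to\mathbf{Pos}$ be a doctrine and $\mathsf K=(K,\kappa,\mu,\nu)$ a comonad on $P$ in $\mathbf{IdxPos}$. Let $\mathcal C_K$, $P^{\mathsf K}$ and $(U,u):P^{\mathsf K}\to P$ be as follows: $\mathcal C_K$ is the category of $K$-coalgebras, $P^{\mathsf K}(C,c)=\{\alpha\in PC\mid\alpha\le P(c)(\kappa_C\alpha)\}$ with reindexing by restriction of that of $P$, $U$ is the forgetful functor and $u$ the family of inclusions $P^{\mathsf K}(C,c)\hookrightarrow PC$. Let $\hat K:\mathcal C\to\mathcal C_K$ be the cofree coalgebra functor $\hat KX=(KX,\mu_X)$, and let $\eta^{\mathsf K}:\mathrm{Id}_{\mathcal C_K}\Rightarrow\hat KU$ be given by $\eta^{\mathsf K}_{(X,c)}=c$. Then $\kappa$ (with components $\kappa_X:PX\to P^{\mathsf K}(KX,\mu_X)$) defines a 1-arrow $(\hat K,\kappa):P\to P^{\mathsf K}$, and $(U,u)\dashv(\hat K,\kappa)$ is an adjunction in $\mathbf{IdxPos}$ with unit $\eta^{\mathsf K}$ and counit $\nu$.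
   Context: A doctrine is a functor $P:\mathcal C^{op}\to\mathbf{Pos}$; for $t:X\to Y$, $P(t):PY\to PX$ is reindexing. In the 2-category $\mathbf{IdxPos}$, a 1-arrow $(F,f):P\to Q$ (with $P:\mathcal C^{op}\to\mathbf{Pos}$, $Q:\mathcal D^{op}\to\mathbf{Pos}$) is a functor $F:\mathcal C\to\mathcal D$ with a natural transformation $f:P\Rightarrow Q\circ F^{op}$; a 2-arrow $\theta:(F,f)\Rightarrow(F',f')$ is a natural transformation $\theta:F\Rightarrow F'$ with $f_X(\alpha)\le Q(\theta_X)(f'_X(\alpha))$ for all $X,\alpha$; composition of $(G,g)$ then $(F,f)$ is $(FG,(fG^{op})\cdot g)$ (components $f_{GX}\circ g_X$), and 2-arrows compose as natural transformations. A comonad on $P$ in $\mathbf{IdxPos}$ amounts to $(K,\kappa,\mu,\nu)$ where $(K,\mu,\nu)$ is a comonad on $\mathcal C$, $\kappa:P\Rightarrow PK^{op}$ is natural, and for all $X$, $\kappa_X\le P(\mu_X)\circ\kappa_{KX}\circ\kappa_X$ and $\kappa_X\le P(\nu_X)$ pointwise. Adjunctions in $\mathbf{IdxPos}$ are in the usual 2-categorical sense. $K$-coalgebras are pairs $(C,c:C\to KC)$ with $\nu_C c=\mathrm{id}$, $\mu_C c=Kc\circ c$. *)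

theory Defs
  imports Main
begin

record ('o,'a) cat =
  Ob  :: "'o set"
  Ar  :: "'a set"
  Dom :: "'a \<Rightarrow> 'o"
  Cod :: "'a \<Rightarrow> 'o"
  Idt :: "'o \<Rightarrow> 'a"
  Cmp :: "'a \<Rightarrow> 'a \<Rightarrow> 'a"   (* Cmp C g f = g after f *)

definition hom :: "('o,'a) cat \<Rightarrow> 'o \<Rightarrow> 'o \<Rightarrow> 'a set" where
  "hom C X Y = {f \<in> Ar C. Dom C f = X \<and> Cod C f = Y}"

definition category :: "('o,'a) cat \<Rightarrow> bool" where
  "category C \<longleftrightarrow>
     (\<forall>f\<in>Ar C. Dom C f \<in> Ob C \<and> Cod C f \<in> Ob C) \<and>
     (\<forall>X\<in>Ob C. Idt C X \<in> hom C X X) \<and>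
     (\<forall>f\<in>Ar C. \<forall>g\<in>Ar C. Cod C f = Dom C g \<longrightarrow> Cmp C g f \<in> hom C (Dom C f) (Cod C g)) \<and>
     (\<forall>f\<in>Ar C. Cmp C (Idt C (Cod C f)) f = f \<and> Cmp C f (Idt C (Dom C f)) = f) \<and>
     (\<forall>f\<in>Ar C. \<forall>g\<in>Ar C. \<forall>h\<in>Ar C. Cod C f = Dom C g \<longrightarrow> Cod C g = Dom C h \<longrightarrow>
        Cmp C h (Cmp C g f) = Cmp C (Cmp C h g) f)"

type_synonym ('o,'a,'o2,'a2) ftr = "('o \<Rightarrow> 'o2) \<times> ('a \<Rightarrow> 'a2)"

abbreviation fo :: "('o,'a,'o2,'a2) ftr \<Rightarrow> 'o \<Rightarrow> 'o2" where "fo F \<equiv> fst F"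
abbreviation fa :: "('o,'a,'o2,'a2) ftr \<Rightarrow> 'a \<Rightarrow> 'a2" where "fa F \<equiv> snd F"

definition is_functor :: "('o,'a) cat \<Rightarrow> ('o2,'a2) cat \<Rightarrow> ('o,'a,'o2,'a2) ftr \<Rightarrow> bool" where
  "is_functor C D F \<longleftrightarrow> category C \<and> category D \<and>
     (\<forall>X\<in>Ob C. fo F X \<in> Ob D) \<and>
     (\<forall>f\<in>Ar C. fa F f \<in> hom D (fo F (Dom C f)) (fo F (Cod C f))) \<and>
     (\<forall>X\<in>Ob C. fa F (Idt C X) = Idt D (fo F X)) \<and>
     (\<forall>f\<in>Ar C. \<forall>g\<in>Ar C. Cod C f = Dom C g \<longrightarrow>
        fa F (Cmp C g f) = Cmp D (fa F g) (fa F f))"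

definition ftr_id :: "('o,'a,'o,'a) ftr" where
  "ftr_id = (\<lambda>X. X, \<lambda>f. f)"

definition ftr_comp :: "('o2,'a2,'o3,'a3) ftr \<Rightarrow> ('o,'a,'o2,'a2) ftr \<Rightarrow> ('o,'a,'o3,'a3) ftr" where
  "ftr_comp G F = (\<lambda>X. fo G (fo F X), \<lambda>f. fa G (fa F f))"

definition nat_trans :: "('o,'a) cat \<Rightarrow> ('o2,'a2) cat \<Rightarrow> ('o,'a,'o2,'a2) ftr \<Rightarrow> ('o,'a,'o2,'a2) ftr
     \<Rightarrow> ('o \<Rightarrow> 'a2) \<Rightarrow> bool" where
  "nat_trans C D F G \<theta> \<longleftrightarrow> is_functor C D F \<and> is_functor C D G \<and>
     (\<forall>X\<in>Ob C. \<theta> X \<in> hom D (fo F X) (fo G X)) \<and>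
     (\<forall>f\<in>Ar C. Cmp D (\<theta> (Cod C f)) (fa F f) = Cmp D (fa G f) (\<theta> (Dom C f)))"

definition comonad :: "('o,'a) cat \<Rightarrow> ('o,'a,'o,'a) ftr \<Rightarrow> ('o \<Rightarrow> 'a) \<Rightarrow> ('o \<Rightarrow> 'a) \<Rightarrow> bool" where
  "comonad C K \<mu> \<nu> \<longleftrightarrow> is_functor C C K \<and>
     nat_trans C C K (ftr_comp K K) \<mu> \<and> nat_trans C C K ftr_id \<nu> \<and>
     (\<forall>X\<in>Ob C. Cmp C (\<nu> (fo K X)) (\<mu> X) = Idt C (fo K X)) \<and>
     (\<forall>X\<in>Ob C. Cmp C (fa K (\<nu> X)) (\<mu> X) = Idt C (fo K X)) \<and>
     (\<forall>X\<in>Ob C. Cmp C (\<mu> (fo K X)) (\<mu> X) = Cmp C (fa K (\<mu> X)) (\<mu> X))"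

text \<open>A doctrine \<open>P : C^op \<rightarrow> Pos\<close>: base category, fibre posets (carrier + order),
  reindexing \<open>Rx t : P Y \<rightarrow> P X\<close> for \<open>t : X \<rightarrow> Y\<close>.\<close>

record ('o,'a,'p) doct =
  Base :: "('o,'a) cat"
  Fib  :: "'o \<Rightarrow> 'p set"
  Le   :: "'o \<Rightarrow> 'p \<Rightarrow> 'p \<Rightarrow> bool"
  Rx   :: "'a \<Rightarrow> 'p \<Rightarrow> 'p"

definition doctrine :: "('o,'a,'p) doct \<Rightarrow> bool" where
  "doctrine P \<longleftrightarrow> category (Base P) \<and>
     (\<forall>X\<in>Ob (Base P).
        (\<forall>a\<in>Fib P X. Le P X a a) \<and>
        (\<forall>a\<in>Fib P X. \<forall>b\<in>Fib P X. Le P X a b \<longrightarrow> Le P X b a \<longrightarrow> a = b) \<and>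
        (\<forall>a\<in>Fib P X. \<forall>b\<in>Fib P X. \<forall>c\<in>Fib P X. Le P X a b \<longrightarrow> Le P X b c \<longrightarrow> Le P X a c)) \<and>
     (\<forall>t\<in>Ar (Base P). \<forall>a\<in>Fib P (Cod (Base P) t). Rx P t a \<in> Fib P (Dom (Base P) t)) \<and>
     (\<forall>t\<in>Ar (Base P). \<forall>a\<in>Fib P (Cod (Base P) t). \<forall>b\<in>Fib P (Cod (Base P) t).
        Le P (Cod (Base P) t) a b \<longrightarrow> Le P (Dom (Base P) t) (Rx P t a) (Rx P t b)) \<and>
     (\<forall>X\<in>Ob (Base P). \<forall>a\<in>Fib P X. Rx P (Idt (Base P) X) a = a) \<and>
     (\<forall>f\<in>Ar (Base P). \<forall>g\<in>Ar (Base P). Cod (Base P) f = Dom (Base P) g \<longrightarrow>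
        (\<forall>a\<in>Fib P (Cod (Base P) g). Rx P (Cmp (Base P) g f) a = Rx P f (Rx P g a)))"

text \<open>1-arrows \<open>(F,f) : P \<rightarrow> Q\<close>: a functor and a natural transformation
  \<open>f : P \<Rightarrow> Q \<circ> F^op\<close> with monotone components.\<close>

type_synonym ('o,'a,'p,'o2,'a2,'q) arr1 = "('o,'a,'o2,'a2) ftr \<times> ('o \<Rightarrow> 'p \<Rightarrow> 'q)"

definition one_arrow :: "('o,'a,'p) doct \<Rightarrow> ('o2,'a2,'q) doct \<Rightarrow> ('o,'a,'p,'o2,'a2,'q) arr1 \<Rightarrow> bool" where
  "one_arrow P Q A \<longleftrightarrow> doctrine P \<and> doctrine Q \<and>
     is_functor (Base P) (Base Q) (fst A) \<and>
     (\<forall>X\<in>Ob (Base P). \<forall>a\<in>Fib P X. snd A X a \<in> Fib Q (fo (fst A) X)) \<and>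
     (\<forall>X\<in>Ob (Base P). \<forall>a\<in>Fib P X. \<forall>b\<in>Fib P X. Le P X a b \<longrightarrow>
        Le Q (fo (fst A) X) (snd A X a) (snd A X b)) \<and>
     (\<forall>t\<in>Ar (Base P). \<forall>a\<in>Fib P (Cod (Base P) t).
        snd A (Dom (Base P) t) (Rx P t a) = Rx Q (fa (fst A) t) (snd A (Cod (Base P) t) a))"

definition two_arrow :: "('o,'a,'p) doct \<Rightarrow> ('o2,'a2,'q) doct \<Rightarrow> ('o,'a,'p,'o2,'a2,'q) arr1
     \<Rightarrow> ('o,'a,'p,'o2,'a2,'q) arr1 \<Rightarrow> ('o \<Rightarrow> 'a2) \<Rightarrow> bool" where
  "two_arrow P Q A B \<theta> \<longleftrightarrow> one_arrow P Q A \<and> one_arrow P Q B \<and>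
     nat_trans (Base P) (Base Q) (fst A) (fst B) \<theta> \<and>
     (\<forall>X\<in>Ob (Base P). \<forall>a\<in>Fib P X.
        Le Q (fo (fst A) X) (snd A X a) (Rx Q (\<theta> X) (snd B X a)))"

definition arr1_id :: "('o,'a,'p,'o,'a,'p) arr1" where
  "arr1_id = (ftr_id, \<lambda>X a. a)"

text \<open>\<open>arr1_comp B A\<close>: first \<open>A = (G,g)\<close>, then \<open>B = (F,f)\<close>; result \<open>(FG, f_{G-} \<circ> g)\<close>.\<close>

definition arr1_comp :: "('o2,'a2,'q,'o3,'a3,'r) arr1 \<Rightarrow> ('o,'a,'p,'o2,'a2,'q) arr1
     \<Rightarrow> ('o,'a,'p,'o3,'a3,'r) arr1" where
  "arr1_comp B A = (ftr_comp (fst B) (fst A), \<lambda>X a. snd B (fo (fst A) X) (snd A X a))"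

text \<open>Adjunction \<open>L \<stileturn> R\<close> in IdxPos, \<open>L : P \<rightarrow> Q\<close>, \<open>R : Q \<rightarrow> P\<close>, with unit
  \<open>\<eta> : id \<Rightarrow> R L\<close> and counit \<open>\<epsilon> : L R \<Rightarrow> id\<close> and the triangle identities
  (vertical composition of 2-arrows is componentwise composition).\<close>

definition adjunction :: "('o,'a,'p) doct \<Rightarrow> ('o2,'a2,'q) doct \<Rightarrow> ('o,'a,'p,'o2,'a2,'q) arr1
     \<Rightarrow> ('o2,'a2,'q,'o,'a,'p) arr1 \<Rightarrow> ('o \<Rightarrow> 'a) \<Rightarrow> ('o2 \<Rightarrow> 'a2) \<Rightarrow> bool" where
  "adjunction P Q L R \<eta> \<epsilon> \<longleftrightarrow> one_arrow P Q L \<and> one_arrow Q P R \<and>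
     two_arrow P P arr1_id (arr1_comp R L) \<eta> \<and>
     two_arrow Q Q (arr1_comp L R) arr1_id \<epsilon> \<and>
     (\<forall>X\<in>Ob (Base P). Cmp (Base Q) (\<epsilon> (fo (fst L) X)) (fa (fst L) (\<eta> X)) = Idt (Base Q) (fo (fst L) X)) \<and>
     (\<forall>Y\<in>Ob (Base Q). Cmp (Base P) (fa (fst R) (\<epsilon> Y)) (\<eta> (fo (fst R) Y)) = Idt (Base P) (fo (fst R) Y))"

definition doct_comonad :: "('o,'a,'p) doct \<Rightarrow> ('o,'a,'o,'a) ftr \<Rightarrow> ('o \<Rightarrow> 'p \<Rightarrow> 'p)
     \<Rightarrow> ('o \<Rightarrow> 'a) \<Rightarrow> ('o \<Rightarrow> 'a) \<Rightarrow> bool" where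
  "doct_comonad P K \<kappa> \<mu> \<nu> \<longleftrightarrow> comonad (Base P) K \<mu> \<nu> \<and> one_arrow P P (K, \<kappa>) \<and>
     (\<forall>X\<in>Ob (Base P). \<forall>a\<in>Fib P X.
        Le P (fo K X) (\<kappa> X a) (Rx P (\<mu> X) (\<kappa> (fo K X) (\<kappa> X a))) \<and>
        Le P (fo K X) (\<kappa> X a) (Rx P (\<nu> X) a))"

text \<open>Objects of \<open>C_K\<close>: coalgebras \<open>(C,c)\<close>. Arrows: triples (source, target, underlying arrow).\<close>

definition coalg_ob :: "('o,'a) cat \<Rightarrow> ('o,'a,'o,'a) ftr \<Rightarrow> ('o \<Rightarrow> 'a) \<Rightarrow> ('o \<Rightarrow> 'a) \<Rightarrow> ('o \<times> 'a) set" where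
  "coalg_ob C K \<mu> \<nu> = {(X, c). X \<in> Ob C \<and> c \<in> hom C X (fo K X) \<and>
      Cmp C (\<nu> X) c = Idt C X \<and> Cmp C (\<mu> X) c = Cmp C (fa K c) c}"

definition coalg_cat :: "('o,'a) cat \<Rightarrow> ('o,'a,'o,'a) ftr \<Rightarrow> ('o \<Rightarrow> 'a) \<Rightarrow> ('o \<Rightarrow> 'a)
     \<Rightarrow> ('o \<times> 'a, ('o \<times> 'a) \<times> ('o \<times> 'a) \<times> 'a) cat" where
  "coalg_cat C K \<mu> \<nu> = \<lparr>
     Ob = coalg_ob C K \<mu> \<nu>,
     Ar = {(A, B, f). A \<in> coalg_ob C K \<mu> \<nu> \<and> B \<in> coalg_ob C K \<mu> \<nu> \<and>
             f \<in> hom C (fst A) (fst B) \<and> Cmp C (snd B) f = Cmp C (fa K f) (snd A)},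
     Dom = (\<lambda>h. fst h),
     Cod = (\<lambda>h. fst (snd h)),
     Idt = (\<lambda>A. (A, A, Idt C (fst A))),
     Cmp = (\<lambda>g f. (fst f, fst (snd g), Cmp C (snd (snd g)) (snd (snd f)))) \<rparr>"

definition coalg_doct :: "('o,'a,'p) doct \<Rightarrow> ('o,'a,'o,'a) ftr \<Rightarrow> ('o \<Rightarrow> 'p \<Rightarrow> 'p)
     \<Rightarrow> ('o \<Rightarrow> 'a) \<Rightarrow> ('o \<Rightarrow> 'a) \<Rightarrow> ('o \<times> 'a, ('o \<times> 'a) \<times> ('o \<times> 'a) \<times> 'a, 'p) doct" where
  "coalg_doct P K \<kappa> \<mu> \<nu> = \<lparr>
     Base = coalg_cat (Base P) K \<mu> \<nu>,
     Fib = (\<lambda>(C, c). {a \<in> Fib P C. Le P C a (Rx P c (\<kappa> C a))}),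
     Le = (\<lambda>A. Le P (fst A)),
     Rx = (\<lambda>h. Rx P (snd (snd h))) \<rparr>"

definition forget_arr :: "(('o \<times> 'a), ('o \<times> 'a) \<times> ('o \<times> 'a) \<times> 'a, 'p, 'o, 'a, 'p) arr1" where
  "forget_arr = ((\<lambda>A. fst A, \<lambda>h. snd (snd h)), \<lambda>A a. a)"

definition cofree :: "('o,'a) cat \<Rightarrow> ('o,'a,'o,'a) ftr \<Rightarrow> ('o \<Rightarrow> 'a)
     \<Rightarrow> ('o, 'a, 'o \<times> 'a, ('o \<times> 'a) \<times> ('o \<times> 'a) \<times> 'a) ftr" where
  "cofree C K \<mu> = (\<lambda>X. (fo K X, \<mu> X),
      \<lambda>f. ((fo K (Dom C f), \<mu> (Dom C f)), (fo K (Cod C f), \<mu> (Cod C f)), fa K f))"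

definition coalg_unit :: "('o,'a,'o,'a) ftr \<Rightarrow> ('o \<Rightarrow> 'a) \<Rightarrow> ('o \<times> 'a) \<Rightarrow> ('o \<times> 'a) \<times> ('o \<times> 'a) \<times> 'a" where
  "coalg_unit K \<mu> A = (A, (fo K (fst A), \<mu> (fst A)), snd A)"

end

theory Submission
  imports Defs
begin

lemma functor_id: "category C \<Longrightarrow> is_functor C C ftr_id"
  unfolding is_functor_def ftr_id_def category_def by (auto simp: hom_def)

lemma functor_comp:
  assumes F: "is_functor C D F" and G: "is_functor D E G"
  shows "is_functor C E (ftr_comp G F)"
proof -
  have cC: "category C" and cE: "category E" using F G is_functor_def by blast+
  have F1: "\<forall>X\<in>Ob C. fo F X \<in> Ob D"
   and F2: "\<forall>f\<in>Ar C. fa F f \<in> hom D (fo F (Dom C f)) (fo F (Cod C f))"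
   and F3: "\<forall>X\<in>Ob C. fa F (Idt C X) = Idt D (fo F X)"
   and F4: "\<forall>f\<in>Ar C. \<forall>g\<in>Ar C. Cod C f = Dom C g \<longrightarrow> fa F (Cmp C g f) = Cmp D (fa F g) (fa F f)"
    using F unfolding is_functor_def by blast+
  have G1: "\<forall>X\<in>Ob D. fo G X \<in> Ob E"
   and G2: "\<forall>f\<in>Ar D. fa G f \<in> hom E (fo G (Dom D f)) (fo G (Cod D f))"
   and G3: "\<forall>X\<in>Ob D. fa G (Idt D X) = Idt E (fo G X)"
   and G4: "\<forall>f\<in>Ar D. \<forall>g\<in>Ar D. Cod D f = Dom D g \<longrightarrow> fa G (Cmp D g f) = Cmp E (fa G g) (fa G f)"
    using G unfolding is_functor_def by blast+
  show ?thesis unfolding is_functor_def ftr_comp_def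
  proof (simp only: fst_conv snd_conv, intro conjI ballI impI)
    show "category C" "category E" by fact+
    fix X assume "X \<in> Ob C" thus "fo G (fo F X) \<in> Ob E" using F1 G1 by blast
  next
    fix f assume f: "f \<in> Ar C"
    hence "fa F f \<in> Ar D" "Dom D (fa F f) = fo F (Dom C f)" "Cod D (fa F f) = fo F (Cod C f)"
      using F2 by (auto simp: hom_def)
    thus "fa G (fa F f) \<in> hom E (fo G (fo F (Dom C f))) (fo G (fo F (Cod C f)))"
      using G2 by metis
  next
    fix X assume X: "X \<in> Ob C" thus "fa G (fa F (Idt C X)) = Idt E (fo G (fo F X))"
      using F1 F3 G3 by simp
  next
    fix f g assume f: "f \<in> Ar C" and g: "g \<in> Ar C" and e: "Cod C f = Dom C g"
    have "fa F f \<in> Ar D" "fa F g \<in> Ar D" "Cod D (fa F f) = Dom D (fa F g)"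
      using F2 f g e by (auto simp: hom_def)
    thus "fa G (fa F (Cmp C g f)) = Cmp E (fa G (fa F g)) (fa G (fa F f))"
      using F4 G4 f g e by simp
  qed
qed

lemma one_arrow_id: "doctrine P \<Longrightarrow> one_arrow P P arr1_id"
proof -
  assume d: "doctrine P"
  hence "category (Base P)" unfolding doctrine_def by blast
  hence "is_functor (Base P) (Base P) ftr_id" by (rule functor_id)
  with d show ?thesis unfolding one_arrow_def arr1_id_def by (simp add: ftr_id_def)
qed

lemma one_arrow_comp:
  assumes A: "one_arrow P Q A" and B: "one_arrow Q R B"
  shows "one_arrow P R (arr1_comp B A)"
proof -
  have dP: "doctrine P" and dR: "doctrine R" using A B one_arrow_def by blast+
  have FA: "is_functor (Base P) (Base Q) (fst A)" and FB: "is_functor (Base Q) (Base R) (fst B)"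
    using A B one_arrow_def by blast+
  have A1: "\<forall>X\<in>Ob (Base P). \<forall>a\<in>Fib P X. snd A X a \<in> Fib Q (fo (fst A) X)"
   and A2: "\<forall>X\<in>Ob (Base P). \<forall>a\<in>Fib P X. \<forall>b\<in>Fib P X. Le P X a b \<longrightarrow>
        Le Q (fo (fst A) X) (snd A X a) (snd A X b)"
   and A3: "\<forall>t\<in>Ar (Base P). \<forall>a\<in>Fib P (Cod (Base P) t).
        snd A (Dom (Base P) t) (Rx P t a) = Rx Q (fa (fst A) t) (snd A (Cod (Base P) t) a)"
    using A unfolding one_arrow_def by blast+
  have B1: "\<forall>X\<in>Ob (Base Q). \<forall>a\<in>Fib Q X. snd B X a \<in> Fib R (fo (fst B) X)"
   and B2: "\<forall>X\<in>Ob (Base Q). \<forall>a\<in>Fib Q X. \<forall>b\<in>Fib Q X. Le Q X a b \<longrightarrow>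
        Le R (fo (fst B) X) (snd B X a) (snd B X b)"
   and B3: "\<forall>t\<in>Ar (Base Q). \<forall>a\<in>Fib Q (Cod (Base Q) t).
        snd B (Dom (Base Q) t) (Rx Q t a) = Rx R (fa (fst B) t) (snd B (Cod (Base Q) t) a)"
    using B unfolding one_arrow_def by blast+
  have FA1: "\<forall>X\<in>Ob (Base P). fo (fst A) X \<in> Ob (Base Q)"
   and FA2: "\<forall>f\<in>Ar (Base P). fa (fst A) f \<in> hom (Base Q) (fo (fst A) (Dom (Base P) f)) (fo (fst A) (Cod (Base P) f))"
    using FA unfolding is_functor_def by blast+
  show ?thesis unfolding one_arrow_def arr1_comp_def
  proof (simp only: fst_conv snd_conv, intro conjI ballI impI)
    show "doctrine P" "doctrine R" by fact+
    show "is_functor (Base P) (Base R) (ftr_comp (fst B) (fst A))" using functor_comp FA FB by blast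
  next
    fix X a assume X: "X \<in> Ob (Base P)" and a: "a \<in> Fib P X"
    thus "snd B (fo (fst A) X) (snd A X a) \<in> Fib R (fo (ftr_comp (fst B) (fst A)) X)"
      using A1 B1 FA1 by (simp add: ftr_comp_def)
  next
    fix X a b assume X: "X \<in> Ob (Base P)" and a: "a \<in> Fib P X" and b: "b \<in> Fib P X" and le: "Le P X a b"
    thus "Le R (fo (ftr_comp (fst B) (fst A)) X) (snd B (fo (fst A) X) (snd A X a)) (snd B (fo (fst A) X) (snd A X b))"
      using A1 A2 B2 FA1 by (simp add: ftr_comp_def)
  next
    fix t a assume t: "t \<in> Ar (Base P)" and a: "a \<in> Fib P (Cod (Base P) t)"
    have Ft: "fa (fst A) t \<in> Ar (Base Q)" "Dom (Base Q) (fa (fst A) t) = fo (fst A) (Dom (Base P) t)"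
       "Cod (Base Q) (fa (fst A) t) = fo (fst A) (Cod (Base P) t)"
      using FA2 t by (auto simp: hom_def)
    have cP: "Cod (Base P) t \<in> Ob (Base P)" proof -
      have "category (Base P)" using dP unfolding doctrine_def by blast
      hence "\<forall>f\<in>Ar (Base P). Dom (Base P) f \<in> Ob (Base P) \<and> Cod (Base P) f \<in> Ob (Base P)"
        unfolding category_def by blast
      thus ?thesis using t by blast
    qed
    have "snd A (Cod (Base P) t) a \<in> Fib Q (Cod (Base Q) (fa (fst A) t))" using A1 cP a Ft by simp
    then have "snd B (Dom (Base Q) (fa (fst A) t)) (Rx Q (fa (fst A) t) (snd A (Cod (Base P) t) a)) =
       Rx R (fa (fst B) (fa (fst A) t)) (snd B (Cod (Base Q) (fa (fst A) t)) (snd A (Cod (Base P) t) a))"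
      using B3 Ft(1) by blast
    then show "snd B (fo (fst A) (Dom (Base P) t)) (snd A (Dom (Base P) t) (Rx P t a)) =
         Rx R (fa (ftr_comp (fst B) (fst A)) t) (snd B (fo (fst A) (Cod (Base P) t)) (snd A (Cod (Base P) t) a))"
      using A3 B3 t a Ft by (simp add: ftr_comp_def)
  qed
qed

locale cdc =
  fixes P :: "('o,'a,'p) doct"
    and K :: "('o,'a,'o,'a) ftr"
    and \<kappa> :: "'o \<Rightarrow> 'p \<Rightarrow> 'p"
    and \<mu> \<nu> :: "'o \<Rightarrow> 'a"
  assumes dP: "doctrine P"
    and dK: "doct_comonad P K \<kappa> \<mu> \<nu>"
begin

abbreviation "C \<equiv> Base P"

lemma catC: "category C" using dP doctrine_def by blast

lemma c_dom: "f \<in> Ar C \<Longrightarrow> Dom C f \<in> Ob C" and c_cod: "f \<in> Ar C \<Longrightarrow> Cod C f \<in> Ob C"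
  and c_id: "X \<in> Ob C \<Longrightarrow> Idt C X \<in> Ar C \<and> Dom C (Idt C X) = X \<and> Cod C (Idt C X) = X"
  and c_cmp: "f \<in> Ar C \<Longrightarrow> g \<in> Ar C \<Longrightarrow> Cod C f = Dom C g \<Longrightarrow>
      Cmp C g f \<in> Ar C \<and> Dom C (Cmp C g f) = Dom C f \<and> Cod C (Cmp C g f) = Cod C g"
  and c_idl: "f \<in> Ar C \<Longrightarrow> Cmp C (Idt C (Cod C f)) f = f"
  and c_idr: "f \<in> Ar C \<Longrightarrow> Cmp C f (Idt C (Dom C f)) = f"
  and c_assoc: "f \<in> Ar C \<Longrightarrow> g \<in> Ar C \<Longrightarrow> h \<in> Ar C \<Longrightarrow> Cod C f = Dom C g \<Longrightarrow> Cod C g = Dom C h \<Longrightarrow>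
        Cmp C h (Cmp C g f) = Cmp C (Cmp C h g) f"
  using catC unfolding category_def by (auto simp: hom_def)

lemma cmK: "comonad C K \<mu> \<nu>" using dK doct_comonad_def by blast
lemma oaK: "one_arrow P P (K,\<kappa>)" using dK doct_comonad_def by blast

lemma K_ob: "X \<in> Ob C \<Longrightarrow> fo K X \<in> Ob C"
  and K_ar: "f \<in> Ar C \<Longrightarrow> fa K f \<in> Ar C \<and> Dom C (fa K f) = fo K (Dom C f) \<and> Cod C (fa K f) = fo K (Cod C f)"
  and K_id: "X \<in> Ob C \<Longrightarrow> fa K (Idt C X) = Idt C (fo K X)"
  and K_cmp: "f \<in> Ar C \<Longrightarrow> g \<in> Ar C \<Longrightarrow> Cod C f = Dom C g \<Longrightarrow> fa K (Cmp C g f) = Cmp C (fa K g) (fa K f)"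
  using cmK unfolding comonad_def is_functor_def by (auto simp: hom_def)

lemma ntmu: "nat_trans C C K (ftr_comp K K) \<mu>" and ntnu: "nat_trans C C K ftr_id \<nu>"
  and cl1: "X \<in> Ob C \<Longrightarrow> Cmp C (\<nu> (fo K X)) (\<mu> X) = Idt C (fo K X)"
  and cl2: "X \<in> Ob C \<Longrightarrow> Cmp C (fa K (\<nu> X)) (\<mu> X) = Idt C (fo K X)"
  and cl3: "X \<in> Ob C \<Longrightarrow> Cmp C (\<mu> (fo K X)) (\<mu> X) = Cmp C (fa K (\<mu> X)) (\<mu> X)"
  using cmK unfolding comonad_def by blast+

lemma mu_ar: "X \<in> Ob C \<Longrightarrow> \<mu> X \<in> Ar C \<and> Dom C (\<mu> X) = fo K X \<and> Cod C (\<mu> X) = fo K (fo K X)"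
  using ntmu unfolding nat_trans_def hom_def ftr_comp_def by simp
lemma mu_nat: "f \<in> Ar C \<Longrightarrow> Cmp C (\<mu> (Cod C f)) (fa K f) = Cmp C (fa K (fa K f)) (\<mu> (Dom C f))"
  using ntmu unfolding nat_trans_def ftr_comp_def by simp
lemma nu_ar: "X \<in> Ob C \<Longrightarrow> \<nu> X \<in> Ar C \<and> Dom C (\<nu> X) = fo K X \<and> Cod C (\<nu> X) = X"
  using ntnu unfolding nat_trans_def hom_def ftr_id_def by simp
lemma nu_nat: "f \<in> Ar C \<Longrightarrow> Cmp C (\<nu> (Cod C f)) (fa K f) = Cmp C f (\<nu> (Dom C f))"
  using ntnu unfolding nat_trans_def ftr_id_def by simp

lemmas dPu = dP[unfolded doctrine_def]
lemma dP2: "\<forall>X\<in>Ob C.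
        (\<forall>a\<in>Fib P X. Le P X a a) \<and>
        (\<forall>a\<in>Fib P X. \<forall>b\<in>Fib P X. Le P X a b \<longrightarrow> Le P X b a \<longrightarrow> a = b) \<and>
        (\<forall>a\<in>Fib P X. \<forall>b\<in>Fib P X. \<forall>c\<in>Fib P X. Le P X a b \<longrightarrow> Le P X b c \<longrightarrow> Le P X a c)"
  using dPu by (rule conjunct2[THEN conjunct1])
lemma p_refl: "X \<in> Ob C \<Longrightarrow> a \<in> Fib P X \<Longrightarrow> Le P X a a"
  using dP2 by blast
lemma p_anti: "X \<in> Ob C \<Longrightarrow> a \<in> Fib P X \<Longrightarrow> b \<in> Fib P X \<Longrightarrow> Le P X a b \<Longrightarrow> Le P X b a \<Longrightarrow> a = b"
  using dP2 by blast
lemma p_trans: "X \<in> Ob C \<Longrightarrow> a \<in> Fib P X \<Longrightarrow> b \<in> Fib P X \<Longrightarrow> c \<in> Fib P X \<Longrightarrow> Le P X a b \<Longrightarrow> Le P X b c \<Longrightarrow> Le P X a c"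
  using dP2 by blast
lemma p_rx: "t \<in> Ar C \<Longrightarrow> a \<in> Fib P (Cod C t) \<Longrightarrow> Rx P t a \<in> Fib P (Dom C t)"
  using dPu[THEN conjunct2, THEN conjunct2, THEN conjunct1] by blast
lemma p_mono: "t \<in> Ar C \<Longrightarrow> a \<in> Fib P (Cod C t) \<Longrightarrow> b \<in> Fib P (Cod C t) \<Longrightarrow> Le P (Cod C t) a b \<Longrightarrow> Le P (Dom C t) (Rx P t a) (Rx P t b)"
  using dPu[THEN conjunct2, THEN conjunct2, THEN conjunct2, THEN conjunct1] by blast
lemma p_id: "X \<in> Ob C \<Longrightarrow> a \<in> Fib P X \<Longrightarrow> Rx P (Idt C X) a = a"
  using dPu[THEN conjunct2, THEN conjunct2, THEN conjunct2, THEN conjunct2, THEN conjunct1] by blast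
lemma p_cmp: "f \<in> Ar C \<Longrightarrow> g \<in> Ar C \<Longrightarrow> Cod C f = Dom C g \<Longrightarrow> a \<in> Fib P (Cod C g) \<Longrightarrow> Rx P (Cmp C g f) a = Rx P f (Rx P g a)"
  using dPu[THEN conjunct2, THEN conjunct2, THEN conjunct2, THEN conjunct2, THEN conjunct2] by blast

lemma k_fib: "X \<in> Ob C \<Longrightarrow> a \<in> Fib P X \<Longrightarrow> \<kappa> X a \<in> Fib P (fo K X)"
  and k_mono: "X \<in> Ob C \<Longrightarrow> a \<in> Fib P X \<Longrightarrow> b \<in> Fib P X \<Longrightarrow> Le P X a b \<Longrightarrow> Le P (fo K X) (\<kappa> X a) (\<kappa> X b)"
  and k_nat: "t \<in> Ar C \<Longrightarrow> a \<in> Fib P (Cod C t) \<Longrightarrow> \<kappa> (Dom C t) (Rx P t a) = Rx P (fa K t) (\<kappa> (Cod C t) a)"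
  using oaK unfolding one_arrow_def by auto

lemma k_mu: "X \<in> Ob C \<Longrightarrow> a \<in> Fib P X \<Longrightarrow> Le P (fo K X) (\<kappa> X a) (Rx P (\<mu> X) (\<kappa> (fo K X) (\<kappa> X a)))"
  and k_nu: "X \<in> Ob C \<Longrightarrow> a \<in> Fib P X \<Longrightarrow> Le P (fo K X) (\<kappa> X a) (Rx P (\<nu> X) a)"
  using dK unfolding doct_comonad_def by auto

abbreviation "CK \<equiv> coalg_cat C K \<mu> \<nu>"
abbreviation "OK \<equiv> coalg_ob C K \<mu> \<nu>"
abbreviation "PK \<equiv> coalg_doct P K \<kappa> \<mu> \<nu>"

lemma ob_iff: "(X,c) \<in> OK \<longleftrightarrow> X \<in> Ob C \<and> c \<in> Ar C \<and> Dom C c = X \<and> Cod C c = fo K X \<and>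
   Cmp C (\<nu> X) c = Idt C X \<and> Cmp C (\<mu> X) c = Cmp C (fa K c) c"
  by (simp add: coalg_ob_def hom_def)

lemma CK_simps: "Ob CK = OK" "Dom CK h = fst h" "Cod CK h = fst (snd h)" "Idt CK A = (A, A, Idt C (fst A))"
  "Cmp CK g f = (fst f, fst (snd g), Cmp C (snd (snd g)) (snd (snd f)))"
  by (simp_all add: coalg_cat_def)

lemma ar_iff: "(A,B,f) \<in> Ar CK \<longleftrightarrow> A \<in> OK \<and> B \<in> OK \<and> f \<in> Ar C \<and> Dom C f = fst A \<and> Cod C f = fst B \<and>
   Cmp C (snd B) f = Cmp C (fa K f) (snd A)"
  by (simp add: coalg_cat_def hom_def)

lemma PK_simps: "Base PK = CK" "Fib PK (X,c) = {a \<in> Fib P X. Le P X a (Rx P c (\<kappa> X a))}"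
  "Le PK A = Le P (fst A)" "Rx PK h = Rx P (snd (snd h))"
  by (simp_all add: coalg_doct_def)

lemma catCK: "category CK"
  unfolding category_def
proof (intro conjI ballI impI)
  fix h assume "h \<in> Ar CK"
  then obtain A B f where h: "h = (A,B,f)" and "(A,B,f) \<in> Ar CK" by (cases h) auto
  thus "Dom CK h \<in> Ob CK" "Cod CK h \<in> Ob CK" by (auto simp: ar_iff CK_simps)
next
  fix A assume A: "A \<in> Ob CK"
  obtain X c where Ae: "A = (X,c)" by (cases A)
  have o: "(X,c) \<in> OK" using A Ae CK_simps by simp
  hence X: "X \<in> Ob C" "c \<in> Ar C" "Dom C c = X" "Cod C c = fo K X" using ob_iff by auto
  have "Cmp C c (Idt C X) = Cmp C (fa K (Idt C X)) c"
    using X c_idl[of c] c_idr[of c] K_id by simp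
  thus "Idt CK A \<in> hom CK A A"
    using o X c_id[of X] by (simp add: hom_def CK_simps Ae ar_iff)
next
  fix h g assume h: "h \<in> Ar CK" and g: "g \<in> Ar CK" and e: "Cod CK h = Dom CK g"
  obtain A B f where he: "h = (A,B,f)" by (cases h)
  obtain B' D k where ge: "g = (B',D,k)" by (cases g)
  have B': "B' = B" using e he ge CK_simps by simp
  obtain a X where Ae: "A = (X,a)" by (cases A)
  obtain b Y where Be: "B = (Y,b)" by (cases B)
  obtain d Z where De: "D = (Z,d)" by (cases D)
  have hh: "(X,a) \<in> OK" "(Y,b) \<in> OK" "f \<in> Ar C" "Dom C f = X" "Cod C f = Y" "Cmp C b f = Cmp C (fa K f) a"
    using h he Ae Be ar_iff by auto
  have gg: "(Z,d) \<in> OK" "k \<in> Ar C" "Dom C k = Y" "Cod C k = Z" "Cmp C d k = Cmp C (fa K k) b"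
    using g ge B' Be De ar_iff by auto
  have aa: "a \<in> Ar C" "Dom C a = X" "Cod C a = fo K X" using hh(1) ob_iff by auto
  have bb: "b \<in> Ar C" "Dom C b = Y" "Cod C b = fo K Y" using hh(2) ob_iff by auto
  have dd: "d \<in> Ar C" "Dom C d = Z" "Cod C d = fo K Z" using gg(1) ob_iff by auto
  have Kf: "fa K f \<in> Ar C" "Dom C (fa K f) = fo K X" "Cod C (fa K f) = fo K Y" using K_ar hh by auto
  have Kk: "fa K k \<in> Ar C" "Dom C (fa K k) = fo K Y" "Cod C (fa K k) = fo K Z" using K_ar gg by auto
  have "Cmp C d (Cmp C k f) = Cmp C (Cmp C d k) f" using c_assoc[of f k d] hh(3,5) gg(2,3,4) dd by metis
  also have "\<dots> = Cmp C (Cmp C (fa K k) b) f" using gg by simp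
  also have "\<dots> = Cmp C (fa K k) (Cmp C b f)" using c_assoc[of f b "fa K k"] hh(3,5) bb Kk by metis
  also have "\<dots> = Cmp C (fa K k) (Cmp C (fa K f) a)" using hh by simp
  also have "\<dots> = Cmp C (Cmp C (fa K k) (fa K f)) a" using c_assoc[of a "fa K f" "fa K k"] aa Kf Kk by metis
  also have "\<dots> = Cmp C (fa K (Cmp C k f)) a" using K_cmp hh gg by simp
  finally have eq: "Cmp C d (Cmp C k f) = Cmp C (fa K (Cmp C k f)) a" .
  have kf: "Cmp C k f \<in> Ar C" "Dom C (Cmp C k f) = X" "Cod C (Cmp C k f) = Z" using c_cmp hh gg by auto
  show "Cmp CK g h \<in> hom CK (Dom CK h) (Cod CK g)"
    using eq kf hh gg by (simp add: hom_def CK_simps he ge Ae De ar_iff)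
next
  fix h assume h: "h \<in> Ar CK"
  obtain A B f where he: "h = (A,B,f)" by (cases h)
  have hh: "f \<in> Ar C" "Dom C f = fst A" "Cod C f = fst B" using h he ar_iff by auto
  show "Cmp CK (Idt CK (Cod CK h)) h = h" "Cmp CK h (Idt CK (Dom CK h)) = h"
    using c_idl[of f] c_idr[of f] hh by (simp_all add: CK_simps he)
next
  fix h g k assume h: "h \<in> Ar CK" and g: "g \<in> Ar CK" and k: "k \<in> Ar CK"
    and e1: "Cod CK h = Dom CK g" and e2: "Cod CK g = Dom CK k"
  obtain A B f where he: "h = (A,B,f)" by (cases h)
  obtain A1 B1 f1 where ge: "g = (A1,B1,f1)" by (cases g)
  obtain A2 B2 f2 where ke: "k = (A2,B2,f2)" by (cases k)
  have "f \<in> Ar C" "f1 \<in> Ar C" "f2 \<in> Ar C" "Cod C f = Dom C f1" "Cod C f1 = Dom C f2"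
    using h g k e1 e2 he ge ke ar_iff CK_simps by auto
  thus "Cmp CK k (Cmp CK g h) = Cmp CK (Cmp CK k g) h"
    using c_assoc by (simp add: CK_simps he ge ke)
qed

lemma fib_iff: "a \<in> Fib PK A \<longleftrightarrow> a \<in> Fib P (fst A) \<and> Le P (fst A) a (Rx P (snd A) (\<kappa> (fst A) a))"
  by (cases A) (simp add: PK_simps)

lemma ob_fst: "A \<in> OK \<Longrightarrow> fst A \<in> Ob C" by (cases A) (simp add: ob_iff)

lemma rx_fib:
  assumes h: "(A,B,f) \<in> Ar CK" and a: "a \<in> Fib PK B"
  shows "Rx P f a \<in> Fib PK A"
proof -
  obtain X a0 where Ae: "A = (X,a0)" by (cases A)
  obtain Y b where Be: "B = (Y,b)" by (cases B)
  have hh: "(X,a0) \<in> OK" "(Y,b) \<in> OK" "f \<in> Ar C" "Dom C f = X" "Cod C f = Y" "Cmp C b f = Cmp C (fa K f) a0"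
    using h Ae Be ar_iff by auto
  have aa: "a0 \<in> Ar C" "Dom C a0 = X" "Cod C a0 = fo K X" "X \<in> Ob C" using hh(1) ob_iff by auto
  have bb: "b \<in> Ar C" "Dom C b = Y" "Cod C b = fo K Y" "Y \<in> Ob C" using hh(2) ob_iff by auto
  have Kf: "fa K f \<in> Ar C" "Dom C (fa K f) = fo K X" "Cod C (fa K f) = fo K Y" using K_ar hh by auto
  have a1: "a \<in> Fib P Y" "Le P Y a (Rx P b (\<kappa> Y a))" using a Be fib_iff by auto
  have ka: "\<kappa> Y a \<in> Fib P (fo K Y)" using k_fib bb a1 by simp
  have rb: "Rx P b (\<kappa> Y a) \<in> Fib P Y" using p_rx[of b] bb ka by simp
  have rf: "Rx P f a \<in> Fib P X" using p_rx[of f] hh a1 by simp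
  have "Rx P a0 (\<kappa> X (Rx P f a)) = Rx P a0 (Rx P (fa K f) (\<kappa> Y a))"
    using k_nat[of f a] hh a1 by simp
  also have "\<dots> = Rx P (Cmp C (fa K f) a0) (\<kappa> Y a)"
    using p_cmp[of a0 "fa K f" "\<kappa> Y a"] aa Kf ka by simp
  also have "\<dots> = Rx P (Cmp C b f) (\<kappa> Y a)" using hh by simp
  also have "\<dots> = Rx P f (Rx P b (\<kappa> Y a))" using p_cmp[of f b "\<kappa> Y a"] hh bb ka by simp
  finally have eq: "Rx P a0 (\<kappa> X (Rx P f a)) = Rx P f (Rx P b (\<kappa> Y a))" .
  have "Le P X (Rx P f a) (Rx P f (Rx P b (\<kappa> Y a)))"
    using p_mono[of f a "Rx P b (\<kappa> Y a)"] hh a1 rb by simp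
  thus ?thesis using eq rf Ae fib_iff by simp
qed

lemma doctPK: "doctrine PK"
  unfolding doctrine_def PK_simps(1)
proof (intro conjI ballI impI)
  show "category CK" by (rule catCK)
next
  fix A a assume A: "A \<in> Ob CK" and a: "a \<in> Fib PK A"
  thus "Le PK A a a" using p_refl ob_fst CK_simps fib_iff PK_simps by simp
next
  fix A a b assume A: "A \<in> Ob CK" and a: "a \<in> Fib PK A" and b: "b \<in> Fib PK A"
    and "Le PK A a b" "Le PK A b a"
  thus "a = b" using p_anti[of "fst A" a b] ob_fst CK_simps fib_iff PK_simps by simp
next
  fix A a b c assume A: "A \<in> Ob CK" and a: "a \<in> Fib PK A" and b: "b \<in> Fib PK A" and c: "c \<in> Fib PK A"
    and "Le PK A a b" "Le PK A b c"
  thus "Le PK A a c" using p_trans[of "fst A" a b c] ob_fst CK_simps fib_iff PK_simps by simp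
next
  fix h a assume h: "h \<in> Ar CK" and a: "a \<in> Fib PK (Cod CK h)"
  obtain A B f where he: "h = (A,B,f)" by (cases h)
  show "Rx PK h a \<in> Fib PK (Dom CK h)" using rx_fib[of A B f a] h a he by (simp add: PK_simps CK_simps)
next
  fix h a b assume h: "h \<in> Ar CK" and a: "a \<in> Fib PK (Cod CK h)" and b: "b \<in> Fib PK (Cod CK h)"
    and le: "Le PK (Cod CK h) a b"
  obtain A B f where he: "h = (A,B,f)" by (cases h)
  have "f \<in> Ar C" "Dom C f = fst A" "Cod C f = fst B" using h he ar_iff by auto
  thus "Le PK (Dom CK h) (Rx PK h a) (Rx PK h b)"
    using p_mono[of f a b] a b le he by (simp add: PK_simps CK_simps fib_iff)
next
  fix A a assume A: "A \<in> Ob CK" and a: "a \<in> Fib PK A"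
  thus "Rx PK (Idt CK A) a = a" using p_id ob_fst by (simp add: PK_simps CK_simps fib_iff)
next
  fix h g a assume h: "h \<in> Ar CK" and g: "g \<in> Ar CK" and e: "Cod CK h = Dom CK g"
    and a: "a \<in> Fib PK (Cod CK g)"
  obtain A B f where he: "h = (A,B,f)" by (cases h)
  obtain A1 B1 f1 where ge: "g = (A1,B1,f1)" by (cases g)
  have "f \<in> Ar C" "f1 \<in> Ar C" "Cod C f = Dom C f1" "Cod C f1 = fst B1"
    using h g e he ge ar_iff CK_simps by auto
  thus "Rx PK (Cmp CK g h) a = Rx PK h (Rx PK g a)"
    using p_cmp[of f f1 a] a by (simp add: PK_simps CK_simps fib_iff he ge)
qed

abbreviation "KH \<equiv> cofree C K \<mu>"

lemma KH_simps: "fo KH X = (fo K X, \<mu> X)"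
  "fa KH f = ((fo K (Dom C f), \<mu> (Dom C f)), (fo K (Cod C f), \<mu> (Cod C f)), fa K f)"
  by (simp_all add: cofree_def)

lemma KH_ob: "X \<in> Ob C \<Longrightarrow> (fo K X, \<mu> X) \<in> OK"
  using K_ob mu_ar cl1 cl3 by (simp add: ob_iff)

lemma KH_ar: "f \<in> Ar C \<Longrightarrow> fa KH f \<in> Ar CK"
  using K_ar[of f] mu_nat[of f] KH_ob c_dom c_cod by (simp add: KH_simps ar_iff)

lemma functor_KH: "is_functor C CK KH"
  unfolding is_functor_def
proof (intro conjI ballI impI)
  show "category C" by (rule catC)
  show "category CK" by (rule catCK)
next
  fix X assume "X \<in> Ob C" thus "fo KH X \<in> Ob CK" using KH_ob by (simp add: KH_simps CK_simps)
next
  fix f assume "f \<in> Ar C" thus "fa KH f \<in> hom CK (fo KH (Dom C f)) (fo KH (Cod C f))"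
    using KH_ar by (simp add: hom_def KH_simps CK_simps)
next
  fix X assume "X \<in> Ob C" thus "fa KH (Idt C X) = Idt CK (fo KH X)"
    using c_id[of X] K_id[of X] by (simp add: KH_simps CK_simps)
next
  fix f g assume "f \<in> Ar C" "g \<in> Ar C" "Cod C f = Dom C g"
  thus "fa KH (Cmp C g f) = Cmp CK (fa KH g) (fa KH f)"
    using c_cmp[of f g] K_cmp[of f g] by (simp add: KH_simps CK_simps)
qed

lemma oa_R: "one_arrow P PK (KH, \<kappa>)"
  unfolding one_arrow_def fst_conv snd_conv
proof (intro conjI ballI impI)
  show "doctrine P" by (rule dP)
  show "doctrine PK" by (rule doctPK)
  show "is_functor (Base P) (Base PK) KH" using functor_KH by (simp add: PK_simps)
next
  fix X a assume "X \<in> Ob C" "a \<in> Fib P X"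
  thus "\<kappa> X a \<in> Fib PK (fo KH X)" using k_fib k_mu by (simp add: KH_simps fib_iff)
next
  fix X a b assume "X \<in> Ob C" "a \<in> Fib P X" "b \<in> Fib P X" "Le P X a b"
  thus "Le PK (fo KH X) (\<kappa> X a) (\<kappa> X b)" using k_mono by (simp add: KH_simps PK_simps)
next
  fix t a assume "t \<in> Ar C" "a \<in> Fib P (Cod C t)"
  thus "\<kappa> (Dom C t) (Rx P t a) = Rx PK (fa KH t) (\<kappa> (Cod C t) a)"
    using k_nat by (simp add: KH_simps PK_simps)
qed

lemma functor_U: "is_functor CK C (fst forget_arr)"
  unfolding is_functor_def forget_arr_def fst_conv snd_conv
proof (intro conjI ballI impI)
  show "category C" by (rule catC)
  show "category CK" by (rule catCK)
next
  fix A assume "A \<in> Ob CK" thus "fst A \<in> Ob C" using ob_fst CK_simps by simp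
next
  fix h assume h: "h \<in> Ar CK"
  obtain A B f where he: "h = (A,B,f)" by (cases h)
  show "snd (snd h) \<in> hom C (fst (Dom CK h)) (fst (Cod CK h))"
    using h he ar_iff by (simp add: hom_def CK_simps)
next
  fix A assume "A \<in> Ob CK" thus "snd (snd (Idt CK A)) = Idt C (fst A)" by (simp add: CK_simps)
next
  fix h g assume "h \<in> Ar CK" "g \<in> Ar CK" "Cod CK h = Dom CK g"
  thus "snd (snd (Cmp CK g h)) = Cmp C (snd (snd g)) (snd (snd h))" by (simp add: CK_simps)
qed

lemma oa_L: "one_arrow PK P forget_arr"
  unfolding one_arrow_def
proof (intro conjI ballI impI)
  show "doctrine P" by (rule dP)
  show "doctrine PK" by (rule doctPK)
  show "is_functor (Base PK) (Base P) (fst forget_arr)" using functor_U by (simp add: PK_simps)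
next
  fix A a assume "A \<in> Ob (Base PK)" "a \<in> Fib PK A"
  thus "snd forget_arr A a \<in> Fib P (fo (fst forget_arr) A)" by (simp add: forget_arr_def fib_iff)
next
  fix A a b assume "A \<in> Ob (Base PK)" "a \<in> Fib PK A" "b \<in> Fib PK A" "Le PK A a b"
  thus "Le P (fo (fst forget_arr) A) (snd forget_arr A a) (snd forget_arr A b)"
    by (simp add: forget_arr_def PK_simps)
next
  fix h a assume "h \<in> Ar (Base PK)" "a \<in> Fib PK (Cod (Base PK) h)"
  thus "snd forget_arr (Dom (Base PK) h) (Rx PK h a) =
       Rx P (fa (fst forget_arr) h) (snd forget_arr (Cod (Base PK) h) a)"
    by (simp add: forget_arr_def PK_simps)
qed

lemma LR_eq: "arr1_comp forget_arr (KH, \<kappa>) = (K, \<kappa>)"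
  by (simp add: arr1_comp_def forget_arr_def cofree_def ftr_comp_def)

lemma two_counit: "two_arrow P P (arr1_comp forget_arr (KH, \<kappa>)) arr1_id \<nu>"
  unfolding two_arrow_def LR_eq
  using oaK one_arrow_id[OF dP] ntnu k_nu by (simp add: arr1_id_def)

lemma eta_ar: "A \<in> OK \<Longrightarrow> coalg_unit K \<mu> A \<in> Ar CK"
proof -
  assume A: "A \<in> OK"
  obtain X c where Ae: "A = (X,c)" by (cases A)
  have X: "X \<in> Ob C" using A Ae ob_iff by simp
  have "(fo K X, \<mu> X) \<in> OK" using KH_ob[OF X] .
  thus ?thesis using A Ae by (simp add: coalg_unit_def ar_iff ob_iff)
qed

lemma two_unit: "two_arrow PK PK arr1_id (arr1_comp (KH, \<kappa>) forget_arr) (coalg_unit K \<mu>)"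
  unfolding two_arrow_def
proof (intro conjI ballI)
  show "one_arrow PK PK arr1_id" by (rule one_arrow_id[OF doctPK])
  show "one_arrow PK PK (arr1_comp (KH, \<kappa>) forget_arr)" by (rule one_arrow_comp[OF oa_L oa_R])
next
  show "nat_trans (Base PK) (Base PK) (fst arr1_id) (fst (arr1_comp (KH, \<kappa>) forget_arr)) (coalg_unit K \<mu>)"
    unfolding nat_trans_def PK_simps
  proof (intro conjI ballI)
    show "is_functor CK CK (fst arr1_id)" using functor_id[OF catCK] by (simp add: arr1_id_def)
    show "is_functor CK CK (fst (arr1_comp (KH, \<kappa>) forget_arr))"
      using functor_comp[OF functor_U functor_KH] by (simp add: arr1_comp_def)
  next
    fix A assume A: "A \<in> Ob CK"
    thus "coalg_unit K \<mu> A \<in> hom CK (fo (fst arr1_id) A) (fo (fst (arr1_comp (KH, \<kappa>) forget_arr)) A)"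
      using eta_ar[of A] CK_simps
      by (simp add: hom_def arr1_id_def arr1_comp_def ftr_comp_def ftr_id_def forget_arr_def cofree_def coalg_unit_def)
  next
    fix h assume h: "h \<in> Ar CK"
    obtain A B f where he: "h = (A,B,f)" by (cases h)
    have hh: "Cod C f = fst B" "Cmp C (snd B) f = Cmp C (fa K f) (snd A)" using h he ar_iff by auto
    show "Cmp CK (coalg_unit K \<mu> (Cod CK h)) (fa (fst arr1_id) h) =
          Cmp CK (fa (fst (arr1_comp (KH, \<kappa>) forget_arr)) h) (coalg_unit K \<mu> (Dom CK h))"
      using hh by (simp add: he CK_simps arr1_id_def arr1_comp_def ftr_comp_def ftr_id_def forget_arr_def cofree_def coalg_unit_def)
  qed
next
  fix A a assume A: "A \<in> Ob (Base PK)" and a: "a \<in> Fib PK A"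
  thus "Le PK (fo (fst arr1_id) A) (snd arr1_id A a)
          (Rx PK (coalg_unit K \<mu> A) (snd (arr1_comp (KH, \<kappa>) forget_arr) A a))"
    by (simp add: fib_iff PK_simps arr1_id_def arr1_comp_def ftr_id_def forget_arr_def coalg_unit_def)
qed

lemma adj: "adjunction PK P forget_arr (KH, \<kappa>) (coalg_unit K \<mu>) \<nu>"
  unfolding adjunction_def
proof (intro conjI ballI)
  show "one_arrow PK P forget_arr" by (rule oa_L)
  show "one_arrow P PK (KH, \<kappa>)" by (rule oa_R)
  show "two_arrow PK PK arr1_id (arr1_comp (KH, \<kappa>) forget_arr) (coalg_unit K \<mu>)" by (rule two_unit)
  show "two_arrow P P (arr1_comp forget_arr (KH, \<kappa>)) arr1_id \<nu>" by (rule two_counit)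
next
  fix A assume A: "A \<in> Ob (Base PK)"
  obtain X c where Ae: "A = (X,c)" by (cases A)
  have "Cmp C (\<nu> X) c = Idt C X" using A Ae by (simp add: PK_simps CK_simps ob_iff)
  thus "Cmp (Base P) (\<nu> (fo (fst forget_arr) A)) (fa (fst forget_arr) (coalg_unit K \<mu> A)) =
        Idt (Base P) (fo (fst forget_arr) A)"
    by (simp add: Ae forget_arr_def coalg_unit_def)
next
  fix X assume X: "X \<in> Ob C"
  thus "Cmp (Base PK) (fa (fst (KH, \<kappa>)) (\<nu> X)) (coalg_unit K \<mu> (fo (fst (KH, \<kappa>)) X)) =
        Idt (Base PK) (fo (fst (KH, \<kappa>)) X)"
    using nu_ar[of X] cl2[of X] by (simp add: PK_simps CK_simps KH_simps coalg_unit_def)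
qed

end

theorem corollary6p5:
  fixes P :: "('o,'a,'p) doct"
    and K :: "('o,'a,'o,'a) ftr"
    and \<kappa> :: "'o \<Rightarrow> 'p \<Rightarrow> 'p"
    and \<mu> \<nu> :: "'o \<Rightarrow> 'a"
  assumes "doctrine P"
    and "doct_comonad P K \<kappa> \<mu> \<nu>"
  shows "one_arrow P (coalg_doct P K \<kappa> \<mu> \<nu>) (cofree (Base P) K \<mu>, \<kappa>)
       \<and> adjunction (coalg_doct P K \<kappa> \<mu> \<nu>) P forget_arr (cofree (Base P) K \<mu>, \<kappa>)
                    (coalg_unit K \<mu>) \<nu>"
proof -
  interpret cdc P K \<kappa> \<mu> \<nu> using assms by unfold_locales
  show ?thesis using oa_R adj by blast
qed

end
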